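(* Let $\ell^\infty\neq0$ be a complex constant. For $k\in\{1,2\}$ let $\Sigma^{(k)}$ be finite disjoint index sets, and for $\alpha\in\Sigma^{(k)}$ let $m_\alpha\ge1$, $z_\alpha\in\mathbb C$ (pairwise distinct within each $\Sigma^{(k)}$), and $\ell^\alpha_{[p]}\in\mathbb C$ ($0\le p\le m_\alpha-1$) with $\ell^\alpha_{[m_\alpha-1]}\neq0$. Let $\chi_k(z)=\sum_{\alpha\in\Sigma^{(k)}}\sum_{p=0}^{m_\alpha-1}\frac{\ell^\alpha_{[p]}}{(z-z_\alpha)^{p+1}}$, $\varphi_k(z)=\chi_k(z)-\ell^\infty$, $M_k=\sum_{\alpha\in\Sigma^{(k)}}m_\alpha$, $M=M_1+M_2$. Assume the zeros of $\varphi_1$, labelled $\zeta^{(1)}_i$, $1\le i\le M_1$, and of $\varphi_2$, labelled $\zeta^{(2)}_i$, $M_1<i\le M$, are simple. For $\gamma\neq0$ let $\varphi_{1\otimes2,\gamma}(z)=\chi_1(z)+\chi_2(z-\gamma^{-1})-\ell^\infty$. Then for $\gamma$ small enough one can order the $M$ zeros $\zeta_i(\gamma)$ of $\varphi_{1\otimes2,\gamma}$ so that $\zeta_i(\gamma)$ is canonically associated with $\zeta^{(k)}_i$ ($k=1$ for $i\le M_1$, $k=2$ for $i>M_1$); more precisely this canonical labelling is the unique one satisfying $\zeta_i(\gamma)=\zeta^{(1)}_i+O(\gamma)$ for $i\in\{1,\dots,M_1\}$ and $\zeta_i(\gamma)=\frac1\gamma+\zeta^{(2)}_i+O(\gamma)$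 for $i\in\{M_1+1,\dots,M\}$. Moreover, for $\gamma$ small enough these zeros are simple. *)

theory Defs
  imports "HOL-Analysis.Analysis" "HOL-Library.Landau_Symbols"
begin

definition chi :: "'a set \<Rightarrow> ('a \<Rightarrow> nat) \<Rightarrow> ('a \<Rightarrow> complex) \<Rightarrow> ('a \<Rightarrow> nat \<Rightarrow> complex)
                    \<Rightarrow> complex \<Rightarrow> complex" where
  "chi S m z l w = (\<Sum>\<alpha>\<in>S. \<Sum>p<m \<alpha>. l \<alpha> p / (w - z \<alpha>) ^ (p + 1))"

definition Mtot :: "'a set \<Rightarrow> ('a \<Rightarrow> nat) \<Rightarrow> nat" where
  "Mtot S m = (\<Sum>\<alpha>\<in>S. m \<alpha>)"

definition phi :: "'a set \<Rightarrow> ('a \<Rightarrow> nat) \<Rightarrow> ('a \<Rightarrow> complex) \<Rightarrow> ('a \<Rightarrow> nat \<Rightarrow> complex)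
                    \<Rightarrow> complex \<Rightarrow> complex \<Rightarrow> complex" where
  "phi S m z l linf w = chi S m z l w - linf"

definition zeros_phi :: "'a set \<Rightarrow> ('a \<Rightarrow> nat) \<Rightarrow> ('a \<Rightarrow> complex) \<Rightarrow> ('a \<Rightarrow> nat \<Rightarrow> complex)
                    \<Rightarrow> complex \<Rightarrow> complex set" where
  "zeros_phi S m z l linf = {w. w \<notin> z ` S \<and> phi S m z l linf w = 0}"

definition phi_tensor :: "'a set \<Rightarrow> 'a set \<Rightarrow> ('a \<Rightarrow> nat) \<Rightarrow> ('a \<Rightarrow> complex)
                    \<Rightarrow> ('a \<Rightarrow> nat \<Rightarrow> complex) \<Rightarrow> complex \<Rightarrow> complex \<Rightarrow> complex \<Rightarrow> complex" where
  "phi_tensor S1 S2 m z l linf \<gamma> w = chi S1 m z l w + chi S2 m z l (w - inverse \<gamma>) - linf"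

definition zeros_tensor :: "'a set \<Rightarrow> 'a set \<Rightarrow> ('a \<Rightarrow> nat) \<Rightarrow> ('a \<Rightarrow> complex)
                    \<Rightarrow> ('a \<Rightarrow> nat \<Rightarrow> complex) \<Rightarrow> complex \<Rightarrow> complex \<Rightarrow> complex set" where
  "zeros_tensor S1 S2 m z l linf \<gamma> =
     {w. w \<notin> z ` S1 \<and> w \<notin> (\<lambda>\<alpha>. z \<alpha> + inverse \<gamma>) ` S2 \<and> phi_tensor S1 S2 m z l linf \<gamma> w = 0}"

end

theory Submission
  imports Defs "HOL-Complex_Analysis.Complex_Analysis" "HOL-Computational_Algebra.Polynomial"
begin

lemma poly_count:
  fixes A :: "'b set" and a :: "'b \<Rightarrow> complex" and mm :: "'b \<Rightarrow> nat"
    and ll :: "'b \<Rightarrow> nat \<Rightarrow> complex" and linf :: complex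
  assumes finA: "finite A" and linf: "linf \<noteq> 0"
  shows "finite {w. w \<notin> a ` A \<and> (\<Sum>\<alpha>\<in>A. \<Sum>p<mm \<alpha>. ll \<alpha> p / (w - a \<alpha>)^(p+1)) - linf = 0}
     \<and> card {w. w \<notin> a ` A \<and> (\<Sum>\<alpha>\<in>A. \<Sum>p<mm \<alpha>. ll \<alpha> p / (w - a \<alpha>)^(p+1)) - linf = 0}
        \<le> (\<Sum>\<alpha>\<in>A. mm \<alpha>)"
proof -
  define Q where "Q = (\<Prod>\<alpha>\<in>A. [:-a \<alpha>, 1:]^mm \<alpha>)"
  define n where "n = (\<Sum>\<alpha>\<in>A. mm \<alpha>)"
  have Q0: "Q \<noteq> 0" using finA by (auto simp: Q_def)
  have degQ: "degree Q = n" unfolding Q_def n_def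
    by (subst degree_prod_sum_eq) (auto simp: degree_linear_power)
  have lcQ: "lead_coeff Q = 1" by (simp add: Q_def lead_coeff_prod lead_coeff_power)
  define P where "P = (\<Sum>\<alpha>\<in>A. \<Sum>p<mm \<alpha>. smult (ll \<alpha> p) (Q div [:-a \<alpha>,1:]^(p+1))) - smult linf Q"
  have dvd: "[:-a \<alpha>,1:]^(p+1) dvd Q" if "\<alpha>\<in>A" "p < mm \<alpha>" for \<alpha> p
  proof -
    have "[:-a \<alpha>,1:]^(p+1) dvd [:-a \<alpha>,1:]^(mm \<alpha>)" using that by (intro le_imp_power_dvd) auto
    also have "\<dots> dvd Q" unfolding Q_def using finA that by (intro dvd_prodI) auto
    finally show ?thesis .
  qed
  have degdiv: "degree (Q div [:-a \<alpha>,1:]^(p+1)) < n" if "\<alpha>\<in>A" "p < mm \<alpha>" for \<alpha> p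
  proof -
    have eq: "Q = (Q div [:-a \<alpha>,1:]^(p+1)) * [:-a \<alpha>,1:]^(p+1)" using dvd[OF that] by simp
    have "Q div [:-a \<alpha>,1:]^(p+1) \<noteq> 0" using Q0 eq by (metis mult_zero_left)
    moreover have "[:-a \<alpha>,1:]^(p+1) \<noteq> 0" by (metis pCons_eq_0_iff power_not_zero zero_neq_one)
    ultimately have "degree Q = degree (Q div [:-a \<alpha>,1:]^(p+1)) + degree ([:-a \<alpha>,1:]^(p+1))"
      using eq degree_mult_eq by metis
    hence "degree Q = degree (Q div [:-a \<alpha>,1:]^(p+1)) + (p+1)"
      by (simp only: degree_linear_power)
    thus ?thesis using degQ by simp
  qed
  have evalterm: "poly (Q div [:-a \<alpha>,1:]^(p+1)) w = poly Q w / (w - a \<alpha>)^(p+1)"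
    if "\<alpha>\<in>A" "p < mm \<alpha>" "w \<noteq> a \<alpha>" for \<alpha> p w
  proof -
    have eq: "Q = (Q div [:-a \<alpha>,1:]^(p+1)) * [:-a \<alpha>,1:]^(p+1)" using dvd[OF that(1,2)] by simp
    have "poly Q w = poly (Q div [:-a \<alpha>,1:]^(p+1)) w * (w - a \<alpha>)^(p+1)"
      by (subst eq) (simp add: poly_power del: power_Suc)
    thus ?thesis using that(3) by (simp add: field_simps)
  qed
  have eval: "poly P w = poly Q w * ((\<Sum>\<alpha>\<in>A. \<Sum>p<mm \<alpha>. ll \<alpha> p / (w - a \<alpha>)^(p+1)) - linf)"
    if "w \<notin> a ` A" for w
  proof -
    have "poly P w = (\<Sum>\<alpha>\<in>A. \<Sum>p<mm \<alpha>. ll \<alpha> p * (poly Q w / (w - a \<alpha>)^(p+1))) - linf * poly Q w"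
      unfolding P_def poly_diff poly_sum poly_smult
    proof (intro arg_cong2[where f="(-)"] sum.cong refl)
      fix \<alpha> p assume "\<alpha> \<in> A" "p \<in> {..<mm \<alpha>}"
      moreover have "w \<noteq> a \<alpha>" using that \<open>\<alpha> \<in> A\<close> by auto
      ultimately show "ll \<alpha> p * poly (Q div [:- a \<alpha>, 1:] ^ (p + 1)) w = ll \<alpha> p * (poly Q w / (w - a \<alpha>) ^ (p + 1))"
        using evalterm by simp
    qed
    thus ?thesis by (simp add: algebra_simps sum_distrib_left)
  qed
  have cn: "coeff P n = - linf"
  proof -
    have "coeff (Q div [:-a \<alpha>,1:]^(p+1)) n = 0" if "\<alpha>\<in>A" "p < mm \<alpha>" for \<alpha> p
      using degdiv[OF that] by (simp add: coeff_eq_0)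
    hence "coeff (\<Sum>\<alpha>\<in>A. \<Sum>p<mm \<alpha>. smult (ll \<alpha> p) (Q div [:-a \<alpha>,1:]^(p+1))) n = 0"
      by (simp add: coeff_sum)
    moreover have "coeff Q n = 1" using lcQ degQ by simp
    ultimately show ?thesis by (simp add: P_def)
  qed
  have P0: "P \<noteq> 0" using cn linf by auto
  have degP: "degree P \<le> n"
    unfolding P_def
    apply (intro degree_diff_le degree_sum_le finA finite_lessThan)
    using degdiv degQ by (auto intro: order.trans[OF degree_smult_le] less_imp_le)
  have sub: "{w. w \<notin> a ` A \<and> (\<Sum>\<alpha>\<in>A. \<Sum>p<mm \<alpha>. ll \<alpha> p / (w - a \<alpha>)^(p+1)) - linf = 0} \<subseteq> {w. poly P w = 0}"
    using eval by auto
  have "finite {w. poly P w = 0}" using poly_roots_finite[OF P0] .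
  moreover have "card {w. poly P w = 0} \<le> n" using card_poly_roots_bound[OF P0] degP by linarith
  ultimately show ?thesis using sub n_def by (meson card_mono finite_subset order.trans)
qed

definition chid :: "'a set \<Rightarrow> ('a \<Rightarrow> nat) \<Rightarrow> ('a \<Rightarrow> complex) \<Rightarrow> ('a \<Rightarrow> nat \<Rightarrow> complex)
                    \<Rightarrow> complex \<Rightarrow> complex" where
  "chid S m z l w = (\<Sum>\<alpha>\<in>S. \<Sum>p<m \<alpha>. - (of_nat (p+1) * l \<alpha> p) / (w - z \<alpha>) ^ (p + 2))"

lemma aux_div: "(q::complex) \<noteq> 0 \<Longrightarrow> - (c * (k * q)) / (q * y) = - (k * c) / y"
proof -
  assume q: "q \<noteq> 0"
  have "- (c * (k * q)) / (q * y) = (- (k*c) * q) / (y * q)" by (simp add: ac_simps)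
  also have "\<dots> = - (k*c) / y" using q by simp
  finally show ?thesis .
qed

lemma term_deriv:
  fixes a c :: complex
  assumes "w \<noteq> a"
  shows "((\<lambda>w. c / (w - a) ^ (p + 1)) has_field_derivative - (of_nat (p+1) * c) / (w - a) ^ (p + 2)) (at w)"
proof -
  have ne: "w - a \<noteq> 0" using assms by simp
  have d: "((\<lambda>w. (w - a)^(p+1)) has_field_derivative of_nat (p+1) * (w - a)^p) (at w)"
    by (rule derivative_eq_intros refl | simp)+
  have d2: "((\<lambda>w. c / (w-a)^(p+1)) has_field_derivative
     (0 * (w-a)^(p+1) - c * (of_nat (p+1) * (w-a)^p)) / ((w-a)^(p+1) * (w-a)^(p+1))) (at w)"
    by (rule DERIV_divide[OF DERIV_const d]) (use assms in simp)
  have e: "(w - a) ^ (p + 1) * (w - a) ^ (p + 1) = (w - a) ^ p * (w - a) ^ (p + 2)"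
    by (simp flip: power_add)
  have np: "(w - a) ^ p \<noteq> 0" using ne by simp
  have "(0 * (w-a)^(p+1) - c * (of_nat (p+1) * (w-a)^p)) / ((w-a)^(p+1) * (w-a)^(p+1))
      = - (of_nat (p + 1) * c) / (w - a) ^ (p + 2)"
    unfolding e using aux_div[OF np] by simp
  with d2 show ?thesis by simp
qed

lemma chi_deriv:
  assumes "w \<notin> z ` T"
  shows "(chi T m z l has_field_derivative chid T m z l w) (at w)"
proof -
  have "((\<lambda>w. \<Sum>\<alpha>\<in>T. \<Sum>p<m \<alpha>. l \<alpha> p / (w - z \<alpha>) ^ (p + 1)) has_field_derivative chid T m z l w) (at w)"
    unfolding chid_def
    apply (intro DERIV_sum term_deriv)
    using assms by auto
  moreover have "chi T m z l = (\<lambda>w. \<Sum>\<alpha>\<in>T. \<Sum>p<m \<alpha>. l \<alpha> p / (w - z \<alpha>) ^ (p + 1))"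
    by (rule ext) (simp add: chi_def)
  ultimately show ?thesis by simp
qed


lemma term_bound_real:
  fixes L d x :: real
  assumes "L \<ge> 0" "d \<ge> 1" "2*d \<ge> x" "x > 0" "k \<ge> 1"
  shows "L / d^k \<le> 2*L/x"
proof -
  have "d^1 \<le> d^k" using assms by (intro power_increasing) auto
  hence dk: "d \<le> d^k" by simp
  have "L / d^k \<le> L / d" using assms dk by (intro divide_left_mono) auto
  also have "\<dots> \<le> L / (x/2)" using assms by (intro divide_left_mono) auto
  finally show ?thesis by (simp add: mult.commute)
qed

lemma chi_bound:
  assumes finT: "finite T"
  shows "\<exists>R K. R > 0 \<and> K \<ge> 0 \<and> (\<forall>\<alpha>\<in>T. norm (z \<alpha>) < R) \<and>
     (\<forall>v. norm v \<ge> R \<longrightarrow> norm (chi T m z l v) \<le> K / norm v \<and> norm (chid T m z l v) \<le> K / norm v)"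
proof -
  define R where "R = 2 + 2*(\<Sum>\<alpha>\<in>T. norm (z \<alpha>))"
  define K where "K = (\<Sum>\<alpha>\<in>T. \<Sum>p<m \<alpha>. 2*(of_nat (p+1) * norm (l \<alpha> p)))"
  have zle: "norm (z \<alpha>) \<le> (\<Sum>\<alpha>\<in>T. norm (z \<alpha>))" if "\<alpha> \<in> T" for \<alpha>
    using finT that by (intro member_le_sum) auto
  have sumnn: "(\<Sum>\<alpha>\<in>T. norm (z \<alpha>)) \<ge> 0" by (intro sum_nonneg) auto
  have Rpos: "R > 0" unfolding R_def using sumnn by simp
  have Knn: "K \<ge> 0" unfolding K_def by (intro sum_nonneg) auto
  have zlt: "\<forall>\<alpha>\<in>T. norm (z \<alpha>) < R" unfolding R_def using zle sumnn by fastforce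
  have bnd: "norm (chi T m z l v) \<le> K / norm v \<and> norm (chid T m z l v) \<le> K / norm v"
    if v: "norm v \<ge> R" for v
  proof -
    have vpos: "norm v > 0" using v Rpos by linarith
    have dprops: "norm (v - z \<alpha>) \<ge> 1 \<and> 2 * norm (v - z \<alpha>) \<ge> norm v" if "\<alpha> \<in> T" for \<alpha>
    proof -
      have "2 * norm (z \<alpha>) + 2 \<le> norm v" using zle[OF that] v unfolding R_def by simp
      moreover have "norm (v - z \<alpha>) \<ge> norm v - norm (z \<alpha>)" by (simp add: norm_triangle_ineq2)
      ultimately show ?thesis using norm_ge_zero[of "z \<alpha>"] by linarith
    qed
    have t1: "norm (l \<alpha> p / (v - z \<alpha>) ^ (p + 1)) \<le> 2*(of_nat (p+1) * norm (l \<alpha> p)) / norm v"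
      if "\<alpha> \<in> T" for \<alpha> p
    proof -
      have "norm (l \<alpha> p / (v - z \<alpha>) ^ (p + 1)) = norm (l \<alpha> p) / norm (v - z \<alpha>) ^ (p + 1)"
        by (simp add: norm_divide norm_power del: power_Suc)
      also have "\<dots> \<le> 2 * norm (l \<alpha> p) / norm v"
        using dprops[OF that] vpos by (intro term_bound_real) auto
      also have "\<dots> \<le> 2*(of_nat (p+1) * norm (l \<alpha> p)) / norm v"
        using vpos by (intro divide_right_mono) (auto simp: algebra_simps)
      finally show ?thesis .
    qed
    have t2: "norm (- (of_nat (p+1) * l \<alpha> p) / (v - z \<alpha>) ^ (p + 2)) \<le> 2*(of_nat (p+1) * norm (l \<alpha> p)) / norm v"
      if "\<alpha> \<in> T" for \<alpha> p
    proof -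
      have "norm (- (of_nat (p+1) * l \<alpha> p) / (v - z \<alpha>) ^ (p + 2)) = (of_nat (p+1) * norm (l \<alpha> p)) / norm (v - z \<alpha>) ^ (p + 2)"
        by (simp only: norm_divide norm_power norm_mult norm_minus_cancel norm_of_nat)
      also have "\<dots> \<le> 2*(of_nat (p+1) * norm (l \<alpha> p)) / norm v"
        using dprops[OF that] vpos by (intro term_bound_real) auto
      finally show ?thesis .
    qed
    have "norm (chi T m z l v) \<le> (\<Sum>\<alpha>\<in>T. \<Sum>p<m \<alpha>. norm (l \<alpha> p / (v - z \<alpha>) ^ (p + 1)))"
      unfolding chi_def by (intro order.trans[OF norm_sum] sum_mono norm_sum)
    also have "\<dots> \<le> (\<Sum>\<alpha>\<in>T. \<Sum>p<m \<alpha>. 2*(of_nat (p+1) * norm (l \<alpha> p)) / norm v)"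
      using t1 by (intro sum_mono) auto
    also have "\<dots> = K / norm v" unfolding K_def by (simp add: sum_divide_distrib)
    finally have c1: "norm (chi T m z l v) \<le> K / norm v" .
    have "norm (chid T m z l v) \<le> (\<Sum>\<alpha>\<in>T. \<Sum>p<m \<alpha>. norm (- (of_nat (p+1) * l \<alpha> p) / (v - z \<alpha>) ^ (p + 2)))"
      unfolding chid_def by (intro order.trans[OF norm_sum] sum_mono norm_sum)
    also have "\<dots> \<le> (\<Sum>\<alpha>\<in>T. \<Sum>p<m \<alpha>. 2*(of_nat (p+1) * norm (l \<alpha> p)) / norm v)"
      using t2 by (intro sum_mono) auto
    also have "\<dots> = K / norm v" unfolding K_def by (simp add: sum_divide_distrib)
    finally show ?thesis using c1 by simp
  qed
  show ?thesis using Rpos Knn zlt bnd by blast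
qed


lemma pert:
  assumes finT: "finite T" and s: "s \<noteq> 0" and \<rho>: "\<rho> > 0"
  shows "\<exists>K. eventually (\<lambda>\<gamma>. \<forall>u\<in>ball \<zeta> \<rho>. u - s * inverse \<gamma> \<notin> z`T
     \<and> ((\<lambda>u. chi T m z l (u - s * inverse \<gamma>)) has_field_derivative chid T m z l (u - s * inverse \<gamma>)) (at u)
     \<and> norm (chi T m z l (u - s * inverse \<gamma>)) \<le> K * norm \<gamma>
     \<and> norm (chid T m z l (u - s * inverse \<gamma>)) \<le> K * norm \<gamma>) (at 0)"
proof -
  obtain R K0 where R: "R > 0" and K0: "K0 \<ge> 0" and zR: "\<forall>\<alpha>\<in>T. norm (z \<alpha>) < R"
    and bnd: "\<And>v. norm v \<ge> R \<Longrightarrow> norm (chi T m z l v) \<le> K0 / norm v \<and> norm (chid T m z l v) \<le> K0 / norm v"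
    using chi_bound[OF finT, of z m l] by blast
  define B where "B = norm \<zeta> + \<rho>"
  have Bpos: "B > 0" unfolding B_def using \<rho> by (simp add: add_nonneg_pos)
  define e where "e = norm s / (2*(B+R))"
  have epos: "e > 0" unfolding e_def using s Bpos R by simp
  define K where "K = 2 * K0 / norm s"
  have "\<forall>\<^sub>F \<gamma> in at 0. \<forall>u\<in>ball \<zeta> \<rho>. u - s * inverse \<gamma> \<notin> z`T
     \<and> ((\<lambda>u. chi T m z l (u - s * inverse \<gamma>)) has_field_derivative chid T m z l (u - s * inverse \<gamma>)) (at u)
     \<and> norm (chi T m z l (u - s * inverse \<gamma>)) \<le> K * norm \<gamma>
     \<and> norm (chid T m z l (u - s * inverse \<gamma>)) \<le> K * norm \<gamma>"
    unfolding eventually_at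
  proof (rule exI[of _ e], intro conjI[OF epos] ballI impI)
    fix \<gamma> :: complex and u
    assume \<gamma>: "\<gamma> \<in> UNIV" "\<gamma> \<noteq> 0 \<and> dist \<gamma> 0 < e" and u: "u \<in> ball \<zeta> \<rho>"
    define v where "v = u - s * inverse \<gamma>"
    have g0: "norm \<gamma> > 0" using \<gamma> by simp
    have ge: "norm \<gamma> < e" using \<gamma> by simp
    define X where "X = norm s / norm \<gamma>"
    have "norm \<gamma> * (2*(B+R)) < norm s" using ge unfolding e_def using Bpos R
      by (simp add: pos_less_divide_eq)
    hence X: "X > 2*(B+R)" unfolding X_def using g0 by (simp add: pos_less_divide_eq mult.commute)
    have nu: "norm u \<le> B" unfolding B_def using u
      by (metis dist_norm mem_ball norm_minus_commute norm_triangle_sub order.strict_implies_order add_le_cancel_left order.trans add_mono order_refl)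
    have nsi: "norm (s * inverse \<gamma>) = X" unfolding X_def by (simp add: norm_mult norm_inverse divide_inverse)
    have "norm v \<ge> X - B" unfolding v_def using nu nsi norm_triangle_ineq3[of "s * inverse \<gamma>" u]
      by (metis norm_minus_commute norm_triangle_ineq2 diff_le_eq add.commute order.trans add_le_cancel_left)
    hence vR: "norm v \<ge> R" and vX: "norm v \<ge> X / 2" using X Bpos R by auto
    have notin: "v \<notin> z ` T" using zR vR by auto
    have Xpos: "X > 0" using X Bpos R by simp
    have vpos: "norm v > 0" using vR R by linarith
    have "K0 / norm v \<le> K0 / (X/2)" using vX Xpos K0 vpos by (intro divide_left_mono) auto
    also have "\<dots> = K * norm \<gamma>" unfolding K_def X_def using g0 s by (simp add: field_simps)
    finally have kb: "K0 / norm v \<le> K * norm \<gamma>" .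
    have der: "((\<lambda>u. chi T m z l (u - s * inverse \<gamma>)) has_field_derivative chid T m z l v) (at u)"
    proof -
      have "((\<lambda>u. chi T m z l (u - s * inverse \<gamma>)) has_field_derivative chid T m z l v * 1) (at u)"
      proof (rule DERIV_chain2[where g="\<lambda>u. u - s * inverse \<gamma>" and f="chi T m z l"])
        show "((\<lambda>u. u - s * inverse \<gamma>) has_field_derivative 1) (at u)"
          by (auto intro!: derivative_eq_intros)
        show "(chi T m z l has_field_derivative chid T m z l v) (at (u - s * inverse \<gamma>))"
          using chi_deriv[OF notin] v_def by simp
      qed
      thus ?thesis by simp
    qed
    show "u - s * inverse \<gamma> \<notin> z`T
     \<and> ((\<lambda>u. chi T m z l (u - s * inverse \<gamma>)) has_field_derivative chid T m z l (u - s * inverse \<gamma>)) (at u)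
     \<and> norm (chi T m z l (u - s * inverse \<gamma>)) \<le> K * norm \<gamma>
     \<and> norm (chid T m z l (u - s * inverse \<gamma>)) \<le> K * norm \<gamma>"
      using notin der bnd[OF vR] kb unfolding v_def by auto
  qed
  thus ?thesis by blast
qed

lemma contra_aux:
  fixes x P :: real
  assumes "x > 0" "P > 0" "x < P / 8" "1 / x \<le> 8 / (5 * P)"
  shows False
proof -
  have "5 * P \<le> 8 * x" using assms(1,2,4) by (simp add: divide_le_eq field_simps)
  thus False using assms(2,3) by simp
qed

lemma local_zero:
  fixes f :: "complex \<Rightarrow> complex" and g g' :: "complex \<Rightarrow> complex \<Rightarrow> complex"
  assumes \<rho>: "\<rho> > 0" and holf: "f holomorphic_on ball \<zeta> \<rho>" and f0: "f \<zeta> = 0" and fd: "deriv f \<zeta> \<noteq> 0"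
    and ev: "eventually (\<lambda>\<delta>. \<forall>u\<in>ball \<zeta> \<rho>. (g \<delta> has_field_derivative g' \<delta> u) (at u)
          \<and> norm (g \<delta> u) \<le> K * norm \<delta> \<and> norm (g' \<delta> u) \<le> K * norm \<delta>) (at 0)"
  shows "\<exists>r C. 0 < r \<and> r < \<rho> \<and> eventually (\<lambda>\<delta>. (\<exists>w\<in>cball \<zeta> r. f w + g \<delta> w = 0)
     \<and> (\<forall>w\<in>cball \<zeta> r. f w + g \<delta> w = 0 \<longrightarrow> norm (w - \<zeta>) \<le> C * norm \<delta>
          \<and> (\<exists>D. D \<noteq> 0 \<and> ((\<lambda>u. f u + g \<delta> u) has_field_derivative D) (at w)))) (at 0)"
proof -
  define a where "a = deriv f \<zeta>"
  define A where "A = norm a"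
  have Apos: "A > 0" using fd by (simp add: A_def a_def)
  have cont: "continuous_on (ball \<zeta> \<rho>) (deriv f)"
    using holomorphic_deriv[OF holf open_ball] holomorphic_on_imp_continuous_on by blast
  have "isCont (deriv f) \<zeta>" using cont \<rho> continuous_on_eq_continuous_at[OF open_ball, of \<zeta> \<rho> "deriv f"] by simp
  then obtain r1 where r1: "r1 > 0" "\<And>w. dist w \<zeta> < r1 \<Longrightarrow> dist (deriv f w) (deriv f \<zeta>) < A/4"
    unfolding continuous_at_eps_delta using Apos by (metis divide_pos_pos zero_less_numeral)
  define r where "r = min r1 \<rho> / 2"
  have r: "r > 0" "r < \<rho>" "r < r1" unfolding r_def using r1 \<rho> by auto
  have cb: "cball \<zeta> r \<subseteq> ball \<zeta> \<rho>" using r by auto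
  have dfb: "norm (deriv f w - a) \<le> A/4" if "w \<in> cball \<zeta> r" for w
  proof -
    have "dist w \<zeta> < r1" using that r by (simp add: dist_commute)
    from r1(2)[OF this] show ?thesis by (simp add: a_def dist_norm)
  qed
  have hasd: "(f has_field_derivative deriv f w) (at w)" if "w \<in> ball \<zeta> \<rho>" for w
    by (rule holomorphic_derivI[OF holf open_ball that])
  have lowf: "norm (f w) \<ge> 3*A/4 * norm (w - \<zeta>)" if w: "w \<in> cball \<zeta> r" for w
  proof -
    have hd: "((\<lambda>w. f w - a * (w - \<zeta>)) has_field_derivative deriv f z - a) (at z within cball \<zeta> r)"
      if "z \<in> cball \<zeta> r" for z
    proof -
      have "((\<lambda>w. f w - a * (w - \<zeta>)) has_field_derivative deriv f z - a * (1 - 0)) (at z)"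
        by (intro DERIV_diff DERIV_cmult hasd) (use that cb in auto)
      thus ?thesis by (simp add: has_field_derivative_at_within)
    qed
    have "norm ((f w - a * (w - \<zeta>)) - (f \<zeta> - a * (\<zeta> - \<zeta>))) \<le> A/4 * norm (w - \<zeta>)"
      by (rule field_differentiable_bound[OF convex_cball hd dfb w]) (use r in auto)
    hence "norm (f w - a * (w - \<zeta>)) \<le> A/4 * norm (w - \<zeta>)" using f0 by simp
    moreover have "norm (a * (w - \<zeta>)) = A * norm (w - \<zeta>)" by (simp add: A_def norm_mult)
    moreover have "norm (a * (w - \<zeta>)) \<le> norm (f w) + norm (f w - a * (w - \<zeta>))"
      using norm_triangle_ineq4[of "f w" "f w - a * (w - \<zeta>)"] by simp
    ultimately show ?thesis by linarith
  qed
  have t: "((\<lambda>\<delta>::complex. K * norm \<delta>) \<longlongrightarrow> K * norm (0::complex)) (at 0)"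
    by (intro tendsto_intros)
  have ev1: "eventually (\<lambda>\<delta>::complex. K * norm \<delta> < A * r / 8) (at 0)"
    using order_tendstoD(2)[OF t, of "A * r / 8"] Apos r by simp
  have ev2: "eventually (\<lambda>\<delta>::complex. K * norm \<delta> < A / 4) (at 0)"
    using order_tendstoD(2)[OF t, of "A / 4"] Apos by simp
  define C where "C = 4 * K / (3 * A)"
  have main: "(\<exists>w\<in>cball \<zeta> r. f w + g \<delta> w = 0)
     \<and> (\<forall>w\<in>cball \<zeta> r. f w + g \<delta> w = 0 \<longrightarrow> norm (w - \<zeta>) \<le> C * norm \<delta>
          \<and> (\<exists>D. D \<noteq> 0 \<and> ((\<lambda>u. f u + g \<delta> u) has_field_derivative D) (at w)))"
    if H: "\<forall>u\<in>ball \<zeta> \<rho>. (g \<delta> has_field_derivative g' \<delta> u) (at u)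
          \<and> norm (g \<delta> u) \<le> K * norm \<delta> \<and> norm (g' \<delta> u) \<le> K * norm \<delta>"
      and s1: "K * norm \<delta> < A * r / 8" and s2: "K * norm \<delta> < A / 4" for \<delta>
  proof (intro conjI ballI impI)
    define F where "F = (\<lambda>u. f u + g \<delta> u)"
    have holg: "g \<delta> holomorphic_on ball \<zeta> \<rho>"
      unfolding holomorphic_on_def
      using H by (meson field_differentiable_def has_field_derivative_at_within)
    have holF: "F holomorphic_on ball \<zeta> \<rho>" unfolding F_def by (intro holomorphic_on_add holf holg)
    show "\<exists>w\<in>cball \<zeta> r. f w + g \<delta> w = 0"
    proof (rule ccontr)
      assume nz: "\<not> (\<exists>w\<in>cball \<zeta> r. f w + g \<delta> w = 0)"
      hence nzF: "\<And>w. w \<in> cball \<zeta> r \<Longrightarrow> F w \<noteq> 0" unfolding F_def by auto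
      have "norm (inverse (F \<zeta>)) \<le> 8 / (5 * A * r)"
      proof (rule maximum_modulus_frontier[where S="ball \<zeta> r" and f="\<lambda>w. inverse (F w)"])
        show "(\<lambda>w. inverse (F w)) holomorphic_on interior (ball \<zeta> r)"
        proof -
          have "F holomorphic_on ball \<zeta> r" using holF cb ball_subset_cball
            by (meson holomorphic_on_subset order_trans)
          thus ?thesis using nzF by (auto intro!: holomorphic_on_inverse)
        qed
        show "continuous_on (closure (ball \<zeta> r)) (\<lambda>w. inverse (F w))"
          using r(1) nzF holomorphic_on_imp_continuous_on[OF holF] cb
          by (auto intro!: continuous_on_inverse intro: continuous_on_subset)
        show "bounded (ball \<zeta> r)" by simp
        show "\<zeta> \<in> ball \<zeta> r" using r by simp
        fix w assume "w \<in> frontier (ball \<zeta> r)"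
        hence w: "w \<in> cball \<zeta> r" "norm (w - \<zeta>) = r" using r(1) by (auto simp: dist_norm norm_minus_commute)
        have "norm (f w) \<ge> 3*A/4 * r" using lowf[OF w(1)] w(2) by simp
        moreover have "norm (g \<delta> w) \<le> K * norm \<delta>" using H w(1) cb by auto
        moreover have "norm (F w) \<ge> norm (f w) - norm (g \<delta> w)" unfolding F_def
          using norm_diff_ineq[of "f w" "g \<delta> w"] by simp
        ultimately have Fw: "norm (F w) \<ge> 5 * A * r / 8" using s1 by linarith
        have "5 * A * r / 8 > 0" using Apos r by simp
        hence Fpos: "norm (F w) > 0" using Fw by linarith
        have "norm (inverse (F w)) = 1 / norm (F w)" by (simp add: norm_inverse divide_inverse)
        also have "1 / norm (F w) \<le> 1 / (5 * A * r / 8)" using Fw Apos r Fpos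
          by (intro divide_left_mono) auto
        also have "\<dots> = 8 / (5 * A * r)" by simp
        finally show "norm (inverse (F w)) \<le> 8 / (5 * A * r)" .
      qed
      note mm = this
      have Fz: "F \<zeta> = g \<delta> \<zeta>" unfolding F_def using f0 by simp
      have zb: "\<zeta> \<in> ball \<zeta> \<rho>" using \<rho> by simp
      have gz: "norm (g \<delta> \<zeta>) \<le> K * norm \<delta>" using H zb by blast
      have "\<zeta> \<in> cball \<zeta> r" using r by simp
      hence "F \<zeta> \<noteq> 0" by (rule nzF)
      hence "norm (F \<zeta>) > 0" by simp
      moreover have "norm (F \<zeta>) < A * r / 8"
      proof -
        have "norm (F \<zeta>) = norm (g \<delta> \<zeta>)" using Fz by (rule arg_cong)
        thus ?thesis using gz s1 by linarith
      qed
      moreover have "1 / norm (F \<zeta>) \<le> 8 / (5 * A * r)" using mm by (simp only: norm_inverse divide_inverse mult_1)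
      ultimately have "1 / norm (F \<zeta>) \<le> 8 / (5 * A * r)" and "norm (F \<zeta>) < A * r / 8" and "norm (F \<zeta>) > 0"
        by auto
      thus False using contra_aux[of "norm (F \<zeta>)" "A * r"] Apos r by (simp add: mult.assoc)
    qed
    fix w assume w: "w \<in> cball \<zeta> r" and Fw: "f w + g \<delta> w = 0"
    have wb: "w \<in> ball \<zeta> \<rho>" using w cb by auto
    have "f w = - g \<delta> w" using Fw by (simp add: eq_neg_iff_add_eq_0)
    hence "norm (f w) = norm (g \<delta> w)" by simp
    moreover have "norm (g \<delta> w) \<le> K * norm \<delta>" using H wb by blast
    ultimately have "3*A/4 * norm (w - \<zeta>) \<le> K * norm \<delta>" using lowf[OF w] by linarith
    thus "norm (w - \<zeta>) \<le> C * norm \<delta>" unfolding C_def using Apos by (simp add: field_simps)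
    show "\<exists>D. D \<noteq> 0 \<and> ((\<lambda>u. f u + g \<delta> u) has_field_derivative D) (at w)"
    proof (intro exI conjI)
      show "((\<lambda>u. f u + g \<delta> u) has_field_derivative deriv f w + g' \<delta> w) (at w)"
        using hasd[OF wb] H wb by (intro DERIV_add) auto
      have n1: "norm (deriv f w - a) \<le> A/4" using dfb[OF w] .
      have n2: "norm (g' \<delta> w) \<le> K * norm \<delta>" using H wb by auto
      have "A \<le> norm (deriv f w + g' \<delta> w) + norm (deriv f w - a) + norm (g' \<delta> w)"
      proof -
        have "a = (deriv f w + g' \<delta> w) - (deriv f w - a) - g' \<delta> w" by simp
        have "A = norm ((deriv f w + g' \<delta> w) - (deriv f w - a) - g' \<delta> w)" unfolding A_def by (simp add: algebra_simps)
        also have "\<dots> \<le> norm ((deriv f w + g' \<delta> w) - (deriv f w - a)) + norm (g' \<delta> w)" by (rule norm_triangle_ineq4)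
        also have "\<dots> \<le> norm (deriv f w + g' \<delta> w) + norm (deriv f w - a) + norm (g' \<delta> w)"
          using norm_triangle_ineq4[of "deriv f w + g' \<delta> w" "deriv f w - a"] by linarith
        finally show ?thesis .
      qed
      thus "deriv f w + g' \<delta> w \<noteq> 0" using n1 n2 s2 Apos by auto
    qed
  qed
  show ?thesis
    apply (rule exI[of _ r], rule exI[of _ C])
    using r apply simp
    by (rule eventually_mono[OF eventually_conj[OF ev eventually_conj[OF ev1 ev2]]]) (use main in blast)
qed

lemma phi_deriv:
  assumes "w \<notin> z ` T"
  shows "(phi T m z l linf has_field_derivative chid T m z l w) (at w)"
proof -
  have e: "phi T m z l linf = (\<lambda>w. chi T m z l w - linf)" by (rule ext) (simp add: phi_def)
  show ?thesis unfolding e using DERIV_diff[OF chi_deriv[OF assms] DERIV_const] by simp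
qed

lemma phi_local:
  assumes fin: "finite T" and \<zeta>: "\<zeta> \<in> zeros_phi T m z l linf"
  shows "\<exists>\<rho>>0. ball \<zeta> \<rho> \<subseteq> - (z ` T) \<and> phi T m z l linf holomorphic_on ball \<zeta> \<rho> \<and> phi T m z l linf \<zeta> = 0"
proof -
  have op: "open (- (z ` T))" using fin by (intro open_Compl finite_imp_closed) auto
  have "\<zeta> \<in> - (z ` T)" using \<zeta> by (simp add: zeros_phi_def)
  then obtain \<rho> where \<rho>: "\<rho> > 0" "ball \<zeta> \<rho> \<subseteq> - (z ` T)" using op open_contains_ball by blast
  have "phi T m z l linf holomorphic_on ball \<zeta> \<rho>"
    unfolding holomorphic_on_def field_differentiable_def
  proof
    fix x assume "x \<in> ball \<zeta> \<rho>"
    hence "x \<notin> z ` T" using \<rho>(2) by auto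
    hence "(phi T m z l linf has_field_derivative chid T m z l x) (at x within ball \<zeta> \<rho>)"
      by (rule has_field_derivative_at_within[OF phi_deriv])
    thus "\<exists>f'. (phi T m z l linf has_field_derivative f') (at x within ball \<zeta> \<rho>)" by blast
  qed
  thus ?thesis using \<rho> \<zeta> by (auto simp: zeros_phi_def)
qed

lemma cluster1:
  assumes fin: "finite S1" "finite S2" and \<zeta>: "\<zeta> \<in> zeros_phi S1 m z l linf"
    and d: "deriv (phi S1 m z l linf) \<zeta> \<noteq> 0"
  shows "\<exists>r C. r > 0 \<and> eventually (\<lambda>\<gamma>. (\<exists>w\<in>zeros_tensor S1 S2 m z l linf \<gamma>. norm (w - \<zeta>) \<le> r)
    \<and> (\<forall>w\<in>zeros_tensor S1 S2 m z l linf \<gamma>. norm (w - \<zeta>) \<le> r \<longrightarrow>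
        norm (w - \<zeta>) \<le> C * norm \<gamma> \<and> deriv (phi_tensor S1 S2 m z l linf \<gamma>) w \<noteq> 0)) (at 0)"
proof -
  obtain \<rho> where \<rho>: "\<rho> > 0" "ball \<zeta> \<rho> \<subseteq> - (z ` S1)" and hol: "phi S1 m z l linf holomorphic_on ball \<zeta> \<rho>"
    and f0: "phi S1 m z l linf \<zeta> = 0"
    using phi_local[OF fin(1) \<zeta>] by blast
  obtain K where E: "eventually (\<lambda>\<gamma>. \<forall>u\<in>ball \<zeta> \<rho>. u - 1 * inverse \<gamma> \<notin> z`S2
     \<and> ((\<lambda>u. chi S2 m z l (u - 1 * inverse \<gamma>)) has_field_derivative chid S2 m z l (u - 1 * inverse \<gamma>)) (at u)
     \<and> norm (chi S2 m z l (u - 1 * inverse \<gamma>)) \<le> K * norm \<gamma>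
     \<and> norm (chid S2 m z l (u - 1 * inverse \<gamma>)) \<le> K * norm \<gamma>) (at 0)"
    using pert[OF fin(2) one_neq_zero \<rho>(1), where \<zeta>=\<zeta> and z=z and m=m and l=l] by blast
  have "eventually (\<lambda>\<delta>. \<forall>u\<in>ball \<zeta> \<rho>. ((\<lambda>u. chi S2 m z l (u - 1 * inverse \<delta>)) has_field_derivative chid S2 m z l (u - 1 * inverse \<delta>)) (at u)
          \<and> norm (chi S2 m z l (u - 1 * inverse \<delta>)) \<le> K * norm \<delta> \<and> norm (chid S2 m z l (u - 1 * inverse \<delta>)) \<le> K * norm \<delta>) (at 0)"
    using E by (rule eventually_mono) blast
  from local_zero[OF \<rho>(1) hol f0 d, of "\<lambda>\<delta> u. chi S2 m z l (u - 1 * inverse \<delta>)" "\<lambda>\<delta> u. chid S2 m z l (u - 1 * inverse \<delta>)" K, OF this]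
  obtain r C where r: "0 < r" "r < \<rho>" and L: "eventually (\<lambda>\<delta>. (\<exists>w\<in>cball \<zeta> r. phi S1 m z l linf w + chi S2 m z l (w - 1 * inverse \<delta>) = 0)
     \<and> (\<forall>w\<in>cball \<zeta> r. phi S1 m z l linf w + chi S2 m z l (w - 1 * inverse \<delta>) = 0 \<longrightarrow> norm (w - \<zeta>) \<le> C * norm \<delta>
          \<and> (\<exists>D. D \<noteq> 0 \<and> ((\<lambda>u. phi S1 m z l linf u + chi S2 m z l (u - 1 * inverse \<delta>)) has_field_derivative D) (at w)))) (at 0)"
    by blast
  have eqT: "phi_tensor S1 S2 m z l linf \<gamma> = (\<lambda>u. phi S1 m z l linf u + chi S2 m z l (u - 1 * inverse \<gamma>))" for \<gamma>
    by (rule ext) (simp add: phi_tensor_def phi_def)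
  have cbb: "cball \<zeta> r \<subseteq> ball \<zeta> \<rho>" using r by auto
  have cbn: "w \<in> cball \<zeta> r \<longleftrightarrow> norm (w - \<zeta>) \<le> r" for w by (simp add: dist_norm norm_minus_commute)
  have key: "(\<exists>w\<in>zeros_tensor S1 S2 m z l linf \<gamma>. norm (w - \<zeta>) \<le> r)
    \<and> (\<forall>w\<in>zeros_tensor S1 S2 m z l linf \<gamma>. norm (w - \<zeta>) \<le> r \<longrightarrow>
        norm (w - \<zeta>) \<le> C * norm \<gamma> \<and> deriv (phi_tensor S1 S2 m z l linf \<gamma>) w \<noteq> 0)"
    if H1: "\<forall>u\<in>ball \<zeta> \<rho>. u - 1 * inverse \<gamma> \<notin> z`S2"
    and H2: "\<exists>w\<in>cball \<zeta> r. phi S1 m z l linf w + chi S2 m z l (w - 1 * inverse \<gamma>) = 0"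
    and H3: "\<forall>w\<in>cball \<zeta> r. phi S1 m z l linf w + chi S2 m z l (w - 1 * inverse \<gamma>) = 0 \<longrightarrow> norm (w - \<zeta>) \<le> C * norm \<gamma>
          \<and> (\<exists>D. D \<noteq> 0 \<and> ((\<lambda>u. phi S1 m z l linf u + chi S2 m z l (u - 1 * inverse \<gamma>)) has_field_derivative D) (at w))"
    for \<gamma>
  proof
    from H2 obtain w where w: "w \<in> cball \<zeta> r" "phi S1 m z l linf w + chi S2 m z l (w - 1 * inverse \<gamma>) = 0" by blast
    have wb: "w \<in> ball \<zeta> \<rho>" using w cbb by auto
    have "w \<in> zeros_tensor S1 S2 m z l linf \<gamma>"
      unfolding zeros_tensor_def
    proof (intro CollectI conjI)
      show "w \<notin> z ` S1" using wb \<rho>(2) by auto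
      show "w \<notin> (\<lambda>\<alpha>. z \<alpha> + inverse \<gamma>) ` S2"
      proof
        assume "w \<in> (\<lambda>\<alpha>. z \<alpha> + inverse \<gamma>) ` S2"
        then obtain \<alpha> where "\<alpha> \<in> S2" "w = z \<alpha> + inverse \<gamma>" by blast
        hence "w - 1 * inverse \<gamma> \<in> z ` S2" by simp
        thus False using H1 wb by blast
      qed
      show "phi_tensor S1 S2 m z l linf \<gamma> w = 0" unfolding eqT using w(2) by simp
    qed
    thus "\<exists>w\<in>zeros_tensor S1 S2 m z l linf \<gamma>. norm (w - \<zeta>) \<le> r" using w(1) cbn by blast
    show "\<forall>w\<in>zeros_tensor S1 S2 m z l linf \<gamma>. norm (w - \<zeta>) \<le> r \<longrightarrow>
        norm (w - \<zeta>) \<le> C * norm \<gamma> \<and> deriv (phi_tensor S1 S2 m z l linf \<gamma>) w \<noteq> 0"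
    proof (intro ballI impI)
      fix w assume w: "w \<in> zeros_tensor S1 S2 m z l linf \<gamma>" "norm (w - \<zeta>) \<le> r"
      have wc: "w \<in> cball \<zeta> r" using w(2) cbn by blast
      have "phi_tensor S1 S2 m z l linf \<gamma> w = 0" using w(1) by (simp add: zeros_tensor_def)
      hence w0: "phi S1 m z l linf w + chi S2 m z l (w - 1 * inverse \<gamma>) = 0"
        unfolding eqT by simp
      from H3 wc w0 obtain D where c1: "norm (w - \<zeta>) \<le> C * norm \<gamma>" and D0: "D \<noteq> 0" and
        hD: "((\<lambda>u. phi S1 m z l linf u + chi S2 m z l (u - 1 * inverse \<gamma>)) has_field_derivative D) (at w)" by blast
      have "deriv (phi_tensor S1 S2 m z l linf \<gamma>) w = D" unfolding eqT by (rule DERIV_imp_deriv[OF hD])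
      thus "norm (w - \<zeta>) \<le> C * norm \<gamma> \<and> deriv (phi_tensor S1 S2 m z l linf \<gamma>) w \<noteq> 0" using D0 c1 by simp
    qed
  qed
  have ev: "eventually (\<lambda>\<gamma>. (\<exists>w\<in>zeros_tensor S1 S2 m z l linf \<gamma>. norm (w - \<zeta>) \<le> r)
    \<and> (\<forall>w\<in>zeros_tensor S1 S2 m z l linf \<gamma>. norm (w - \<zeta>) \<le> r \<longrightarrow>
        norm (w - \<zeta>) \<le> C * norm \<gamma> \<and> deriv (phi_tensor S1 S2 m z l linf \<gamma>) w \<noteq> 0)) (at 0)"
  proof (rule eventually_mono[OF eventually_conj[OF E L]])
    fix \<gamma> assume H: "(\<lambda>\<gamma>. \<forall>u\<in>ball \<zeta> \<rho>. u - 1 * inverse \<gamma> \<notin> z`S2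
     \<and> ((\<lambda>u. chi S2 m z l (u - 1 * inverse \<gamma>)) has_field_derivative chid S2 m z l (u - 1 * inverse \<gamma>)) (at u)
     \<and> norm (chi S2 m z l (u - 1 * inverse \<gamma>)) \<le> K * norm \<gamma>
     \<and> norm (chid S2 m z l (u - 1 * inverse \<gamma>)) \<le> K * norm \<gamma>) \<gamma> \<and> (\<lambda>\<delta>. (\<exists>w\<in>cball \<zeta> r. phi S1 m z l linf w + chi S2 m z l (w - 1 * inverse \<delta>) = 0)
     \<and> (\<forall>w\<in>cball \<zeta> r. phi S1 m z l linf w + chi S2 m z l (w - 1 * inverse \<delta>) = 0 \<longrightarrow> norm (w - \<zeta>) \<le> C * norm \<delta>
          \<and> (\<exists>D. D \<noteq> 0 \<and> ((\<lambda>u. phi S1 m z l linf u + chi S2 m z l (u - 1 * inverse \<delta>)) has_field_derivative D) (at w)))) \<gamma>"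
    show "(\<exists>w\<in>zeros_tensor S1 S2 m z l linf \<gamma>. norm (w - \<zeta>) \<le> r)
    \<and> (\<forall>w\<in>zeros_tensor S1 S2 m z l linf \<gamma>. norm (w - \<zeta>) \<le> r \<longrightarrow>
        norm (w - \<zeta>) \<le> C * norm \<gamma> \<and> deriv (phi_tensor S1 S2 m z l linf \<gamma>) w \<noteq> 0)"
    proof (rule key)
      show "\<forall>u\<in>ball \<zeta> \<rho>. u - 1 * inverse \<gamma> \<notin> z`S2" using H by blast
      show "\<exists>w\<in>cball \<zeta> r. phi S1 m z l linf w + chi S2 m z l (w - 1 * inverse \<gamma>) = 0" using H by blast
      show "\<forall>w\<in>cball \<zeta> r. phi S1 m z l linf w + chi S2 m z l (w - 1 * inverse \<gamma>) = 0 \<longrightarrow> norm (w - \<zeta>) \<le> C * norm \<gamma>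
          \<and> (\<exists>D. D \<noteq> 0 \<and> ((\<lambda>u. phi S1 m z l linf u + chi S2 m z l (u - 1 * inverse \<gamma>)) has_field_derivative D) (at w))"
        using H by blast
    qed
  qed
  show ?thesis using ev r(1) by blast
qed

lemma cluster2:
  assumes fin: "finite S1" "finite S2" and \<zeta>: "\<zeta> \<in> zeros_phi S2 m z l linf"
    and d: "deriv (phi S2 m z l linf) \<zeta> \<noteq> 0"
  shows "\<exists>r C. r > 0 \<and> eventually (\<lambda>\<gamma>. (\<exists>w\<in>zeros_tensor S1 S2 m z l linf \<gamma>. norm (w - inverse \<gamma> - \<zeta>) \<le> r)
    \<and> (\<forall>w\<in>zeros_tensor S1 S2 m z l linf \<gamma>. norm (w - inverse \<gamma> - \<zeta>) \<le> r \<longrightarrow>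
        norm (w - inverse \<gamma> - \<zeta>) \<le> C * norm \<gamma> \<and> deriv (phi_tensor S1 S2 m z l linf \<gamma>) w \<noteq> 0)) (at 0)"
proof -
  obtain \<rho> where \<rho>: "\<rho> > 0" "ball \<zeta> \<rho> \<subseteq> - (z ` S2)" and hol: "phi S2 m z l linf holomorphic_on ball \<zeta> \<rho>"
    and f0: "phi S2 m z l linf \<zeta> = 0"
    using phi_local[OF fin(2) \<zeta>] by blast
  have m1: "(-1::complex) \<noteq> 0" by simp
  obtain K where E: "eventually (\<lambda>\<gamma>. \<forall>u\<in>ball \<zeta> \<rho>. u - (-1) * inverse \<gamma> \<notin> z`S1
     \<and> ((\<lambda>u. chi S1 m z l (u - (-1) * inverse \<gamma>)) has_field_derivative chid S1 m z l (u - (-1) * inverse \<gamma>)) (at u)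
     \<and> norm (chi S1 m z l (u - (-1) * inverse \<gamma>)) \<le> K * norm \<gamma>
     \<and> norm (chid S1 m z l (u - (-1) * inverse \<gamma>)) \<le> K * norm \<gamma>) (at 0)"
    using pert[OF fin(1) m1 \<rho>(1), where \<zeta>=\<zeta> and z=z and m=m and l=l] by blast
  have "eventually (\<lambda>\<delta>. \<forall>u\<in>ball \<zeta> \<rho>. ((\<lambda>u. chi S1 m z l (u - (-1) * inverse \<delta>)) has_field_derivative chid S1 m z l (u - (-1) * inverse \<delta>)) (at u)
          \<and> norm (chi S1 m z l (u - (-1) * inverse \<delta>)) \<le> K * norm \<delta> \<and> norm (chid S1 m z l (u - (-1) * inverse \<delta>)) \<le> K * norm \<delta>) (at 0)"
    using E by (rule eventually_mono) blast
  from local_zero[OF \<rho>(1) hol f0 d, of "\<lambda>\<delta> u. chi S1 m z l (u - (-1) * inverse \<delta>)" "\<lambda>\<delta> u. chid S1 m z l (u - (-1) * inverse \<delta>)" K, OF this]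
  obtain r C where r: "0 < r" "r < \<rho>" and L: "eventually (\<lambda>\<delta>. (\<exists>w\<in>cball \<zeta> r. phi S2 m z l linf w + chi S1 m z l (w - (-1) * inverse \<delta>) = 0)
     \<and> (\<forall>w\<in>cball \<zeta> r. phi S2 m z l linf w + chi S1 m z l (w - (-1) * inverse \<delta>) = 0 \<longrightarrow> norm (w - \<zeta>) \<le> C * norm \<delta>
          \<and> (\<exists>D. D \<noteq> 0 \<and> ((\<lambda>u. phi S2 m z l linf u + chi S1 m z l (u - (-1) * inverse \<delta>)) has_field_derivative D) (at w)))) (at 0)"
    by blast
  have eqT: "phi_tensor S1 S2 m z l linf \<gamma> = (\<lambda>w. phi S2 m z l linf (w + - inverse \<gamma>) + chi S1 m z l ((w + - inverse \<gamma>) - (-1) * inverse \<gamma>))" for \<gamma>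
    by (rule ext) (simp add: phi_tensor_def phi_def)
  have cbb: "cball \<zeta> r \<subseteq> ball \<zeta> \<rho>" using r by auto
  have cbn: "w \<in> cball \<zeta> r \<longleftrightarrow> norm (w - \<zeta>) \<le> r" for w by (simp add: dist_norm norm_minus_commute)
  have key: "(\<exists>w\<in>zeros_tensor S1 S2 m z l linf \<gamma>. norm (w - inverse \<gamma> - \<zeta>) \<le> r)
    \<and> (\<forall>w\<in>zeros_tensor S1 S2 m z l linf \<gamma>. norm (w - inverse \<gamma> - \<zeta>) \<le> r \<longrightarrow>
        norm (w - inverse \<gamma> - \<zeta>) \<le> C * norm \<gamma> \<and> deriv (phi_tensor S1 S2 m z l linf \<gamma>) w \<noteq> 0)"
    if H1: "\<forall>u\<in>ball \<zeta> \<rho>. u - (-1) * inverse \<gamma> \<notin> z`S1"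
    and H2: "\<exists>w\<in>cball \<zeta> r. phi S2 m z l linf w + chi S1 m z l (w - (-1) * inverse \<gamma>) = 0"
    and H3: "\<forall>w\<in>cball \<zeta> r. phi S2 m z l linf w + chi S1 m z l (w - (-1) * inverse \<gamma>) = 0 \<longrightarrow> norm (w - \<zeta>) \<le> C * norm \<gamma>
          \<and> (\<exists>D. D \<noteq> 0 \<and> ((\<lambda>u. phi S2 m z l linf u + chi S1 m z l (u - (-1) * inverse \<gamma>)) has_field_derivative D) (at w))"
    for \<gamma>
  proof
    from H2 obtain u where u: "u \<in> cball \<zeta> r" "phi S2 m z l linf u + chi S1 m z l (u - (-1) * inverse \<gamma>) = 0" by blast
    have ub: "u \<in> ball \<zeta> \<rho>" using u cbb by auto
    define w where "w = u + inverse \<gamma>"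
    have uw: "w + - inverse \<gamma> = u" unfolding w_def by simp
    have "w \<in> zeros_tensor S1 S2 m z l linf \<gamma>"
      unfolding zeros_tensor_def
    proof (intro CollectI conjI)
      have "u - (-1) * inverse \<gamma> \<notin> z ` S1" using H1 ub by blast
      thus "w \<notin> z ` S1" unfolding w_def by simp
      show "w \<notin> (\<lambda>\<alpha>. z \<alpha> + inverse \<gamma>) ` S2"
      proof
        assume "w \<in> (\<lambda>\<alpha>. z \<alpha> + inverse \<gamma>) ` S2"
        then obtain \<alpha> where "\<alpha> \<in> S2" "w = z \<alpha> + inverse \<gamma>" by blast
        hence "u \<in> z ` S2" unfolding w_def by simp
        thus False using ub \<rho>(2) by blast
      qed
      show "phi_tensor S1 S2 m z l linf \<gamma> w = 0" unfolding eqT uw using u(2) by simp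
    qed
    moreover have "norm (w - inverse \<gamma> - \<zeta>) \<le> r" using u(1) cbn unfolding w_def by simp
    ultimately show "\<exists>w\<in>zeros_tensor S1 S2 m z l linf \<gamma>. norm (w - inverse \<gamma> - \<zeta>) \<le> r" by blast
    show "\<forall>w\<in>zeros_tensor S1 S2 m z l linf \<gamma>. norm (w - inverse \<gamma> - \<zeta>) \<le> r \<longrightarrow>
        norm (w - inverse \<gamma> - \<zeta>) \<le> C * norm \<gamma> \<and> deriv (phi_tensor S1 S2 m z l linf \<gamma>) w \<noteq> 0"
    proof (intro ballI impI)
      fix w assume w: "w \<in> zeros_tensor S1 S2 m z l linf \<gamma>" "norm (w - inverse \<gamma> - \<zeta>) \<le> r"
      define u where "u = w + - inverse \<gamma>"
      have uw: "w - inverse \<gamma> - \<zeta> = u - \<zeta>" unfolding u_def by simp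
      have uc: "u \<in> cball \<zeta> r" using w(2) cbn uw by simp
      have "phi_tensor S1 S2 m z l linf \<gamma> w = 0" using w(1) by (simp add: zeros_tensor_def)
      hence u0: "phi S2 m z l linf u + chi S1 m z l (u - (-1) * inverse \<gamma>) = 0"
        unfolding eqT u_def by simp
      from H3 uc u0 obtain D where c1: "norm (u - \<zeta>) \<le> C * norm \<gamma>" and D0: "D \<noteq> 0" and
        hD: "((\<lambda>u. phi S2 m z l linf u + chi S1 m z l (u - (-1) * inverse \<gamma>)) has_field_derivative D) (at u)" by blast
      have "((\<lambda>w. phi S2 m z l linf (w + - inverse \<gamma>) + chi S1 m z l ((w + - inverse \<gamma>) - (-1) * inverse \<gamma>)) has_field_derivative D) (at w)"
        using hD unfolding u_def DERIV_shift .
      hence "deriv (phi_tensor S1 S2 m z l linf \<gamma>) w = D" unfolding eqT by (rule DERIV_imp_deriv)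
      thus "norm (w - inverse \<gamma> - \<zeta>) \<le> C * norm \<gamma> \<and> deriv (phi_tensor S1 S2 m z l linf \<gamma>) w \<noteq> 0"
        using D0 c1 uw by simp
    qed
  qed
  have ev: "eventually (\<lambda>\<gamma>. (\<exists>w\<in>zeros_tensor S1 S2 m z l linf \<gamma>. norm (w - inverse \<gamma> - \<zeta>) \<le> r)
    \<and> (\<forall>w\<in>zeros_tensor S1 S2 m z l linf \<gamma>. norm (w - inverse \<gamma> - \<zeta>) \<le> r \<longrightarrow>
        norm (w - inverse \<gamma> - \<zeta>) \<le> C * norm \<gamma> \<and> deriv (phi_tensor S1 S2 m z l linf \<gamma>) w \<noteq> 0)) (at 0)"
  proof (rule eventually_mono[OF eventually_conj[OF E L]])
    fix \<gamma> assume H: "(\<lambda>\<gamma>. \<forall>u\<in>ball \<zeta> \<rho>. u - (-1) * inverse \<gamma> \<notin> z`S1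
     \<and> ((\<lambda>u. chi S1 m z l (u - (-1) * inverse \<gamma>)) has_field_derivative chid S1 m z l (u - (-1) * inverse \<gamma>)) (at u)
     \<and> norm (chi S1 m z l (u - (-1) * inverse \<gamma>)) \<le> K * norm \<gamma>
     \<and> norm (chid S1 m z l (u - (-1) * inverse \<gamma>)) \<le> K * norm \<gamma>) \<gamma> \<and> (\<lambda>\<delta>. (\<exists>w\<in>cball \<zeta> r. phi S2 m z l linf w + chi S1 m z l (w - (-1) * inverse \<delta>) = 0)
     \<and> (\<forall>w\<in>cball \<zeta> r. phi S2 m z l linf w + chi S1 m z l (w - (-1) * inverse \<delta>) = 0 \<longrightarrow> norm (w - \<zeta>) \<le> C * norm \<delta>
          \<and> (\<exists>D. D \<noteq> 0 \<and> ((\<lambda>u. phi S2 m z l linf u + chi S1 m z l (u - (-1) * inverse \<delta>)) has_field_derivative D) (at w)))) \<gamma>"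
    show "(\<exists>w\<in>zeros_tensor S1 S2 m z l linf \<gamma>. norm (w - inverse \<gamma> - \<zeta>) \<le> r)
    \<and> (\<forall>w\<in>zeros_tensor S1 S2 m z l linf \<gamma>. norm (w - inverse \<gamma> - \<zeta>) \<le> r \<longrightarrow>
        norm (w - inverse \<gamma> - \<zeta>) \<le> C * norm \<gamma> \<and> deriv (phi_tensor S1 S2 m z l linf \<gamma>) w \<noteq> 0)"
    proof (rule key)
      show "\<forall>u\<in>ball \<zeta> \<rho>. u - (-1) * inverse \<gamma> \<notin> z`S1" using H by blast
      show "\<exists>w\<in>cball \<zeta> r. phi S2 m z l linf w + chi S1 m z l (w - (-1) * inverse \<gamma>) = 0" using H by blast
      show "\<forall>w\<in>cball \<zeta> r. phi S2 m z l linf w + chi S1 m z l (w - (-1) * inverse \<gamma>) = 0 \<longrightarrow> norm (w - \<zeta>) \<le> C * norm \<gamma>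
          \<and> (\<exists>D. D \<noteq> 0 \<and> ((\<lambda>u. phi S2 m z l linf u + chi S1 m z l (u - (-1) * inverse \<gamma>)) has_field_derivative D) (at w))"
        using H by blast
    qed
  qed
  show ?thesis using ev r(1) by blast
qed

lemma assembly:
  fixes Z :: "complex \<Rightarrow> complex set" and cen :: "complex \<Rightarrow> nat \<Rightarrow> complex"
    and I :: "nat set" and r C :: "nat \<Rightarrow> real" and P :: "complex \<Rightarrow> complex \<Rightarrow> bool"
  assumes finI: "finite I"
    and EV: "eventually (\<lambda>\<gamma>. \<forall>i\<in>I. (\<exists>w\<in>Z \<gamma>. norm (w - cen \<gamma> i) \<le> r i)
        \<and> (\<forall>w\<in>Z \<gamma>. norm (w - cen \<gamma> i) \<le> r i \<longrightarrow> norm (w - cen \<gamma> i) \<le> C i * norm \<gamma> \<and> P \<gamma> w)) (at 0)"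
    and SEP: "\<And>K. eventually (\<lambda>\<gamma>. \<forall>i\<in>I. \<forall>j\<in>I. i \<noteq> j \<longrightarrow> K * norm \<gamma> < norm (cen \<gamma> i - cen \<gamma> j)) (at 0)"
    and CNT: "eventually (\<lambda>\<gamma>. finite (Z \<gamma>) \<and> card (Z \<gamma>) \<le> card I) (at 0)"
  shows "\<exists>\<zeta> :: complex \<Rightarrow> nat \<Rightarrow> complex.
     eventually (\<lambda>\<gamma>. bij_betw (\<zeta> \<gamma>) I (Z \<gamma>) \<and> (\<forall>w\<in>Z \<gamma>. P \<gamma> w)) (at 0)
   \<and> (\<forall>i\<in>I. (\<lambda>\<gamma>. \<zeta> \<gamma> i - cen \<gamma> i) \<in> O[at 0](\<lambda>\<gamma>. \<gamma>))
   \<and> (\<forall>\<zeta>' :: complex \<Rightarrow> nat \<Rightarrow> complex.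
        (eventually (\<lambda>\<gamma>. bij_betw (\<zeta>' \<gamma>) I (Z \<gamma>)) (at 0)
         \<and> (\<forall>i\<in>I. (\<lambda>\<gamma>. \<zeta>' \<gamma> i - cen \<gamma> i) \<in> O[at 0](\<lambda>\<gamma>. \<gamma>)))
        \<longrightarrow> eventually (\<lambda>\<gamma>. \<forall>i\<in>I. \<zeta>' \<gamma> i = \<zeta> \<gamma> i) (at 0))"
proof -
  define CS where "CS = (\<Sum>i\<in>I. \<bar>C i\<bar>)"
  have CS: "\<bar>C i\<bar> \<le> CS" if "i \<in> I" for i
    unfolding CS_def using finI that by (intro member_le_sum) auto
  define \<zeta> where "\<zeta> = (\<lambda>\<gamma> i. SOME w. w \<in> Z \<gamma> \<and> norm (w - cen \<gamma> i) \<le> r i)"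
  define EVP where "EVP = (\<lambda>\<gamma>. \<forall>i\<in>I. (\<exists>w\<in>Z \<gamma>. norm (w - cen \<gamma> i) \<le> r i)
        \<and> (\<forall>w\<in>Z \<gamma>. norm (w - cen \<gamma> i) \<le> r i \<longrightarrow> norm (w - cen \<gamma> i) \<le> C i * norm \<gamma> \<and> P \<gamma> w))"
  have zprop: "\<zeta> \<gamma> i \<in> Z \<gamma> \<and> norm (\<zeta> \<gamma> i - cen \<gamma> i) \<le> r i
      \<and> norm (\<zeta> \<gamma> i - cen \<gamma> i) \<le> C i * norm \<gamma>"
    if "EVP \<gamma>" "i \<in> I" for \<gamma> i
  proof -
    from that have ex: "\<exists>w. w \<in> Z \<gamma> \<and> norm (w - cen \<gamma> i) \<le> r i" unfolding EVP_def by blast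
    have "\<zeta> \<gamma> i \<in> Z \<gamma> \<and> norm (\<zeta> \<gamma> i - cen \<gamma> i) \<le> r i"
      unfolding \<zeta>_def by (rule someI_ex[OF ex])
    thus ?thesis using that unfolding EVP_def by blast
  qed
  have zb: "norm (\<zeta> \<gamma> i - cen \<gamma> i) \<le> CS * norm \<gamma>" if "EVP \<gamma>" "i \<in> I" for \<gamma> i
  proof -
    have "C i * norm \<gamma> \<le> CS * norm \<gamma>" using CS[OF that(2)]
      by (intro mult_right_mono) auto
    thus ?thesis using zprop[OF that] by linarith
  qed
  have tri: "norm (a - b) \<le> norm (a - x) + norm (y - b)" if "x = y" for a b x y :: complex
    using that norm_triangle_ineq[of "a - x" "y - b"] by simp
  have good: "bij_betw (\<zeta> \<gamma>) I (Z \<gamma>) \<and> (\<forall>w\<in>Z \<gamma>. P \<gamma> w)"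
    if E: "EVP \<gamma>" and S: "\<forall>i\<in>I. \<forall>j\<in>I. i \<noteq> j \<longrightarrow> (2 * CS) * norm \<gamma> < norm (cen \<gamma> i - cen \<gamma> j)"
      and N: "finite (Z \<gamma>) \<and> card (Z \<gamma>) \<le> card I" for \<gamma>
  proof -
    have inj: "inj_on (\<zeta> \<gamma>) I"
    proof (rule inj_onI, rule ccontr)
      fix i j assume ij: "i \<in> I" "j \<in> I" "\<zeta> \<gamma> i = \<zeta> \<gamma> j" "i \<noteq> j"
      have "norm (cen \<gamma> i - cen \<gamma> j) \<le> norm (cen \<gamma> i - \<zeta> \<gamma> i) + norm (\<zeta> \<gamma> j - cen \<gamma> j)"
        by (rule tri) (rule ij(3))
      also have "\<dots> \<le> CS * norm \<gamma> + CS * norm \<gamma>"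
        using zb[OF E ij(1)] zb[OF E ij(2)] by (simp add: norm_minus_commute)
      finally show False using S ij by force
    qed
    have sub: "\<zeta> \<gamma> ` I \<subseteq> Z \<gamma>" using zprop[OF E] by auto
    have cI: "card (\<zeta> \<gamma> ` I) = card I" using card_image[OF inj] .
    have "card (\<zeta> \<gamma> ` I) = card (Z \<gamma>)" using card_mono[OF _ sub] N cI by linarith
    hence im: "\<zeta> \<gamma> ` I = Z \<gamma>" using card_subset_eq[OF _ sub] N by blast
    have "\<forall>w\<in>Z \<gamma>. P \<gamma> w"
    proof
      fix w assume "w \<in> Z \<gamma>"
      then obtain i where i: "i \<in> I" "w = \<zeta> \<gamma> i" using im by blast
      show "P \<gamma> w" using zprop[OF E i(1)] E i unfolding EVP_def by blast
    qed
    thus ?thesis using inj im unfolding bij_betw_def by blast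
  qed
  have EV': "eventually EVP (at 0)" using EV unfolding EVP_def .
  have part1: "eventually (\<lambda>\<gamma>. bij_betw (\<zeta> \<gamma>) I (Z \<gamma>) \<and> (\<forall>w\<in>Z \<gamma>. P \<gamma> w)) (at 0)"
    using eventually_conj[OF EV' eventually_conj[OF SEP[of "2 * CS"] CNT]]
    by (rule eventually_mono) (use good in blast)
  have part2: "(\<lambda>\<gamma>. \<zeta> \<gamma> i - cen \<gamma> i) \<in> O[at 0](\<lambda>\<gamma>. \<gamma>)" if "i \<in> I" for i
  proof (rule bigoI)
    show "eventually (\<lambda>\<gamma>. norm (\<zeta> \<gamma> i - cen \<gamma> i) \<le> C i * norm \<gamma>) (at 0)"
      using EV' by (rule eventually_mono) (use zprop that in blast)
  qed
  have part3: "eventually (\<lambda>\<gamma>. \<forall>i\<in>I. \<zeta>' \<gamma> i = \<zeta> \<gamma> i) (at 0)"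
    if B: "eventually (\<lambda>\<gamma>. bij_betw (\<zeta>' \<gamma>) I (Z \<gamma>)) (at 0)"
      and O: "\<forall>i\<in>I. (\<lambda>\<gamma>. \<zeta>' \<gamma> i - cen \<gamma> i) \<in> O[at 0](\<lambda>\<gamma>. \<gamma>)" for \<zeta>'
  proof (rule eventually_ball_finite[OF finI], rule ballI)
    fix i assume i: "i \<in> I"
    from O i obtain c where c: "c > 0" and cb: "eventually (\<lambda>\<gamma>. norm (\<zeta>' \<gamma> i - cen \<gamma> i) \<le> c * norm \<gamma>) (at 0)"
      by (auto elim!: landau_o.bigE)
    have one: "\<zeta>' \<gamma> i = \<zeta> \<gamma> i"
      if bj: "bij_betw (\<zeta>' \<gamma>) I (Z \<gamma>)" and b1: "norm (\<zeta>' \<gamma> i - cen \<gamma> i) \<le> c * norm \<gamma>"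
        and E: "EVP \<gamma>" and G: "bij_betw (\<zeta> \<gamma>) I (Z \<gamma>) \<and> (\<forall>w\<in>Z \<gamma>. P \<gamma> w)"
        and S: "\<forall>i\<in>I. \<forall>j\<in>I. i \<noteq> j \<longrightarrow> (c + CS) * norm \<gamma> < norm (cen \<gamma> i - cen \<gamma> j)" for \<gamma>
    proof -
      have "\<zeta>' \<gamma> i \<in> Z \<gamma>" using bj i by (rule bij_betw_apply)
      hence "\<zeta>' \<gamma> i \<in> \<zeta> \<gamma> ` I" using G unfolding bij_betw_def by blast
      then obtain j where j: "j \<in> I" "\<zeta>' \<gamma> i = \<zeta> \<gamma> j" by blast
      have "i = j"
      proof (rule ccontr)
        assume "i \<noteq> j"
        have "norm (cen \<gamma> i - cen \<gamma> j) \<le> norm (cen \<gamma> i - \<zeta>' \<gamma> i) + norm (\<zeta> \<gamma> j - cen \<gamma> j)"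
          by (rule tri) (rule j(2))
        also have "\<dots> \<le> c * norm \<gamma> + CS * norm \<gamma>"
          using zb[OF E j(1)] b1 by (simp add: norm_minus_commute)
        finally show False using S i j(1) \<open>i \<noteq> j\<close> by (force simp: algebra_simps)
      qed
      thus ?thesis using j by simp
    qed
    show "eventually (\<lambda>\<gamma>. \<zeta>' \<gamma> i = \<zeta> \<gamma> i) (at 0)"
      using eventually_conj[OF B eventually_conj[OF cb eventually_conj[OF EV' eventually_conj[OF part1 SEP[of "c + CS"]]]]]
      by (rule eventually_mono) (use one in blast)
  qed
  show ?thesis
    apply (rule exI[of _ \<zeta>])
    using part1 part2 part3 by blast
qed

lemma tensor_count:
  assumes fin: "finite S1" "finite S2" and disj: "S1 \<inter> S2 = {}" and linf: "linf \<noteq> 0"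
  shows "finite (zeros_tensor S1 S2 m z l linf \<gamma>) \<and> card (zeros_tensor S1 S2 m z l linf \<gamma>) \<le> Mtot S1 m + Mtot S2 m"
proof -
  define A where "A = S1 \<union> S2"
  define a where "a = (\<lambda>\<alpha>. if \<alpha> \<in> S1 then z \<alpha> else z \<alpha> + inverse \<gamma>)"
  have finA: "finite A" using fin by (simp add: A_def)
  have sumA: "(\<Sum>\<alpha>\<in>A. f \<alpha>) = (\<Sum>\<alpha>\<in>S1. f \<alpha>) + (\<Sum>\<alpha>\<in>S2. f \<alpha>)" for f :: "'a \<Rightarrow> 'b::comm_monoid_add"
    unfolding A_def using fin disj by (rule sum.union_disjoint)
  have s1: "(\<Sum>\<alpha>\<in>S1. \<Sum>p<m \<alpha>. l \<alpha> p / (w - a \<alpha>) ^ (p + 1)) = chi S1 m z l w" for w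
    unfolding chi_def a_def by (intro sum.cong refl) simp
  have s2: "(\<Sum>\<alpha>\<in>S2. \<Sum>p<m \<alpha>. l \<alpha> p / (w - a \<alpha>) ^ (p + 1)) = chi S2 m z l (w - inverse \<gamma>)" for w
  proof -
    have "\<alpha> \<in> S2 \<Longrightarrow> a \<alpha> = z \<alpha> + inverse \<gamma>" for \<alpha> using disj unfolding a_def by auto
    thus ?thesis unfolding chi_def by (intro sum.cong refl) (simp add: algebra_simps)
  qed
  have sub: "zeros_tensor S1 S2 m z l linf \<gamma> \<subseteq>
     {w. w \<notin> a ` A \<and> (\<Sum>\<alpha>\<in>A. \<Sum>p<m \<alpha>. l \<alpha> p / (w - a \<alpha>)^(p+1)) - linf = 0}"
  proof
    fix w assume w: "w \<in> zeros_tensor S1 S2 m z l linf \<gamma>"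
    have "w \<notin> a ` A"
    proof
      assume "w \<in> a ` A"
      then obtain \<alpha> where al: "\<alpha> \<in> A" "w = a \<alpha>" by blast
      have w1: "w \<notin> z ` S1" and w2: "w \<notin> (\<lambda>\<alpha>. z \<alpha> + inverse \<gamma>) ` S2"
        using w unfolding zeros_tensor_def by blast+
      show False
      proof (cases "\<alpha> \<in> S1")
        case True
        hence "w = z \<alpha>" using al(2) unfolding a_def by simp
        thus False using w1 True by blast
      next
        case False
        hence "\<alpha> \<in> S2" "w = z \<alpha> + inverse \<gamma>" using al unfolding a_def A_def by auto
        thus False using w2 by blast
      qed
    qed
    moreover have "(\<Sum>\<alpha>\<in>A. \<Sum>p<m \<alpha>. l \<alpha> p / (w - a \<alpha>)^(p+1)) - linf = 0"
    proof -
      have "phi_tensor S1 S2 m z l linf \<gamma> w = 0" using w unfolding zeros_tensor_def by blast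
      thus ?thesis unfolding sumA s1 s2 phi_tensor_def .
    qed
    ultimately show "w \<in> {w. w \<notin> a ` A \<and> (\<Sum>\<alpha>\<in>A. \<Sum>p<m \<alpha>. l \<alpha> p / (w - a \<alpha>)^(p+1)) - linf = 0}" by blast
  qed
  have "(\<Sum>\<alpha>\<in>A. m \<alpha>) = Mtot S1 m + Mtot S2 m" unfolding sumA Mtot_def ..
  moreover note pc = poly_count[OF finA linf, where a=a and mm=m and ll=l]
  ultimately show ?thesis using finite_subset[OF sub] card_mono[OF _ sub] by linarith
qed

lemma near_ev: "d > 0 \<Longrightarrow> eventually (\<lambda>\<gamma>::complex. K * norm \<gamma> < d) (at 0)"
proof -
  assume d: "d > 0"
  have t: "((\<lambda>\<delta>::complex. K * norm \<delta>) \<longlongrightarrow> K * norm (0::complex)) (at 0)"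
    by (intro tendsto_intros)
  show ?thesis using order_tendstoD(2)[OF t, of d] d by simp
qed

lemma far_ev: "eventually (\<lambda>\<gamma>::complex. K * norm \<gamma> < norm (c - inverse \<gamma>)) (at 0)"
  unfolding eventually_at
proof (rule exI[of _ "min 1 (1 / (\<bar>K\<bar> + norm c + 1))"], intro conjI ballI impI)
  show "0 < min 1 (1 / (\<bar>K\<bar> + norm c + 1))" by (simp add: add_nonneg_pos)
  fix \<gamma> :: complex assume "\<gamma> \<noteq> 0 \<and> dist \<gamma> 0 < min 1 (1 / (\<bar>K\<bar> + norm c + 1))"
  hence g0: "norm \<gamma> > 0" and g1: "norm \<gamma> < 1" and g2: "norm \<gamma> < 1 / (\<bar>K\<bar> + norm c + 1)" by auto
  have "norm \<gamma> * (\<bar>K\<bar> + norm c + 1) < 1" using g2 by (simp add: pos_less_divide_eq add_nonneg_pos)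
  hence big: "1 / norm \<gamma> > \<bar>K\<bar> + norm c + 1" using g0 by (simp add: pos_less_divide_eq mult.commute)
  have "norm (c - inverse \<gamma>) \<ge> norm (inverse \<gamma>) - norm c" using norm_triangle_ineq3[of "inverse \<gamma>" c]
    by (simp add: norm_minus_commute)
  moreover have "norm (inverse \<gamma>) = 1 / norm \<gamma>" by (simp add: norm_inverse divide_inverse)
  moreover have "K * norm \<gamma> \<le> \<bar>K\<bar>"
  proof -
    have "K * norm \<gamma> \<le> \<bar>K\<bar> * norm \<gamma>" by (intro mult_right_mono) auto
    also have "\<dots> \<le> \<bar>K\<bar> * 1" using g1 by (intro mult_left_mono) auto
    finally show ?thesis by simp
  qed
  ultimately show "K * norm \<gamma> < norm (c - inverse \<gamma>)" using big by linarith
qed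

theorem lemmaC2:
  fixes S1 S2 :: "'a set" and m :: "'a \<Rightarrow> nat" and z :: "'a \<Rightarrow> complex"
    and l :: "'a \<Rightarrow> nat \<Rightarrow> complex" and linf :: complex
    and \<zeta>0 :: "nat \<Rightarrow> complex"
  assumes linf: "linf \<noteq> 0"
    and fin: "finite S1" "finite S2"
    and disj: "S1 \<inter> S2 = {}"
    and mpos: "\<And>\<alpha>. \<alpha> \<in> S1 \<union> S2 \<Longrightarrow> m \<alpha> \<ge> 1"
    and zdist: "inj_on z S1" "inj_on z S2"
    and ltop: "\<And>\<alpha>. \<alpha> \<in> S1 \<union> S2 \<Longrightarrow> l \<alpha> (m \<alpha> - 1) \<noteq> 0"
    and simple1: "\<And>w. w \<in> zeros_phi S1 m z l linf \<Longrightarrow> deriv (phi S1 m z l linf) w \<noteq> 0"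
    and simple2: "\<And>w. w \<in> zeros_phi S2 m z l linf \<Longrightarrow> deriv (phi S2 m z l linf) w \<noteq> 0"
    and lab1: "bij_betw \<zeta>0 {1..Mtot S1 m} (zeros_phi S1 m z l linf)"
    and lab2: "bij_betw \<zeta>0 {Mtot S1 m + 1..Mtot S1 m + Mtot S2 m} (zeros_phi S2 m z l linf)"
  shows "\<exists>\<zeta> :: complex \<Rightarrow> nat \<Rightarrow> complex.
    (\<forall>\<^sub>F \<gamma> in at 0.
        bij_betw (\<zeta> \<gamma>) {1..Mtot S1 m + Mtot S2 m} (zeros_tensor S1 S2 m z l linf \<gamma>)
      \<and> (\<forall>w \<in> zeros_tensor S1 S2 m z l linf \<gamma>. deriv (phi_tensor S1 S2 m z l linf \<gamma>) w \<noteq> 0))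
    \<and> (\<forall>i \<in> {1..Mtot S1 m}. (\<lambda>\<gamma>. \<zeta> \<gamma> i - \<zeta>0 i) \<in> O[at 0](\<lambda>\<gamma>. \<gamma>))
    \<and> (\<forall>i \<in> {Mtot S1 m + 1..Mtot S1 m + Mtot S2 m}.
          (\<lambda>\<gamma>. \<zeta> \<gamma> i - inverse \<gamma> - \<zeta>0 i) \<in> O[at 0](\<lambda>\<gamma>. \<gamma>))
    \<and> (\<forall>\<zeta>' :: complex \<Rightarrow> nat \<Rightarrow> complex.
          ((\<forall>\<^sub>F \<gamma> in at 0.
              bij_betw (\<zeta>' \<gamma>) {1..Mtot S1 m + Mtot S2 m} (zeros_tensor S1 S2 m z l linf \<gamma>))
           \<and> (\<forall>i \<in> {1..Mtot S1 m}. (\<lambda>\<gamma>. \<zeta>' \<gamma> i - \<zeta>0 i) \<in> O[at 0](\<lambda>\<gamma>. \<gamma>))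
           \<and> (\<forall>i \<in> {Mtot S1 m + 1..Mtot S1 m + Mtot S2 m}.
                (\<lambda>\<gamma>. \<zeta>' \<gamma> i - inverse \<gamma> - \<zeta>0 i) \<in> O[at 0](\<lambda>\<gamma>. \<gamma>)))
          \<longrightarrow> (\<forall>\<^sub>F \<gamma> in at 0. \<forall>i \<in> {1..Mtot S1 m + Mtot S2 m}. \<zeta>' \<gamma> i = \<zeta> \<gamma> i))"
proof -
  define I where "I = {1..Mtot S1 m + Mtot S2 m}"
  define Z where "Z = zeros_tensor S1 S2 m z l linf"
  define cen where "cen = (\<lambda>(\<gamma>::complex) i. if i \<le> Mtot S1 m then \<zeta>0 i else \<zeta>0 i + inverse \<gamma>)"
  define P where "P = (\<lambda>\<gamma> w. deriv (phi_tensor S1 S2 m z l linf \<gamma>) w \<noteq> 0)"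
  have finI: "finite I" by (simp add: I_def)
  have cen1: "cen \<gamma> i = \<zeta>0 i" if "i \<le> Mtot S1 m" for \<gamma> i using that by (simp add: cen_def)
  have cen2: "w - cen \<gamma> i = w - inverse \<gamma> - \<zeta>0 i" if "\<not> i \<le> Mtot S1 m" for \<gamma> i w
    using that by (simp add: cen_def algebra_simps)
  define Q where "Q = (\<lambda>i (r::real) (C::real). r > 0 \<and> eventually (\<lambda>\<gamma>. (\<exists>w\<in>Z \<gamma>. norm (w - cen \<gamma> i) \<le> r)
     \<and> (\<forall>w\<in>Z \<gamma>. norm (w - cen \<gamma> i) \<le> r \<longrightarrow> norm (w - cen \<gamma> i) \<le> C * norm \<gamma> \<and> P \<gamma> w)) (at 0))"
  have per: "\<exists>r C. Q i r C" if i: "i \<in> I" for i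
    unfolding Q_def
  proof (cases "i \<le> Mtot S1 m")
    case True
    hence i1: "i \<in> {1..Mtot S1 m}" using i by (simp add: I_def)
    have zi: "\<zeta>0 i \<in> zeros_phi S1 m z l linf" using lab1 i1 by (rule bij_betw_apply)
    show "\<exists>r C. r > 0 \<and> eventually (\<lambda>\<gamma>. (\<exists>w\<in>Z \<gamma>. norm (w - cen \<gamma> i) \<le> r)
     \<and> (\<forall>w\<in>Z \<gamma>. norm (w - cen \<gamma> i) \<le> r \<longrightarrow> norm (w - cen \<gamma> i) \<le> C * norm \<gamma> \<and> P \<gamma> w)) (at 0)"
      unfolding cen1[OF True] Z_def P_def by (rule cluster1[OF fin zi simple1[OF zi]])
  next
    case False
    hence i2: "i \<in> {Mtot S1 m + 1..Mtot S1 m + Mtot S2 m}" using i by (simp add: I_def)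
    have zi: "\<zeta>0 i \<in> zeros_phi S2 m z l linf" using lab2 i2 by (rule bij_betw_apply)
    show "\<exists>r C. r > 0 \<and> eventually (\<lambda>\<gamma>. (\<exists>w\<in>Z \<gamma>. norm (w - cen \<gamma> i) \<le> r)
     \<and> (\<forall>w\<in>Z \<gamma>. norm (w - cen \<gamma> i) \<le> r \<longrightarrow> norm (w - cen \<gamma> i) \<le> C * norm \<gamma> \<and> P \<gamma> w)) (at 0)"
      unfolding cen2[OF False] Z_def P_def by (rule cluster2[OF fin zi simple2[OF zi]])
  qed
  define RC where "RC = (\<lambda>i. SOME p. Q i (fst p) (snd p))"
  define r where "r = (\<lambda>i. fst (RC i))"
  define C where "C = (\<lambda>i. snd (RC i))"
  have rc: "Q i (r i) (C i)" if "i \<in> I" for i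
  proof -
    from per[OF that] obtain r0 C0 where "Q i r0 C0" by blast
    hence "\<exists>p. Q i (fst p) (snd p)" by (intro exI[of _ "(r0, C0)"]) simp
    thus ?thesis unfolding r_def C_def RC_def by (rule someI_ex)
  qed
  have EV: "eventually (\<lambda>\<gamma>. \<forall>i\<in>I. (\<exists>w\<in>Z \<gamma>. norm (w - cen \<gamma> i) \<le> r i)
        \<and> (\<forall>w\<in>Z \<gamma>. norm (w - cen \<gamma> i) \<le> r i \<longrightarrow> norm (w - cen \<gamma> i) \<le> C i * norm \<gamma> \<and> P \<gamma> w)) (at 0)"
  proof (rule eventually_ball_finite[OF finI], rule ballI)
    fix i assume "i \<in> I"
    from rc[OF this] show "eventually (\<lambda>\<gamma>. (\<exists>w\<in>Z \<gamma>. norm (w - cen \<gamma> i) \<le> r i)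
        \<and> (\<forall>w\<in>Z \<gamma>. norm (w - cen \<gamma> i) \<le> r i \<longrightarrow> norm (w - cen \<gamma> i) \<le> C i * norm \<gamma> \<and> P \<gamma> w)) (at 0)"
      unfolding Q_def by (rule conjunct2)
  qed
  have inj1: "inj_on \<zeta>0 {1..Mtot S1 m}" using lab1 by (rule bij_betw_imp_inj_on)
  have inj2: "inj_on \<zeta>0 {Mtot S1 m + 1..Mtot S1 m + Mtot S2 m}" using lab2 by (rule bij_betw_imp_inj_on)
  have SEP: "eventually (\<lambda>\<gamma>. \<forall>i\<in>I. \<forall>j\<in>I. i \<noteq> j \<longrightarrow> K * norm \<gamma> < norm (cen \<gamma> i - cen \<gamma> j)) (at 0)" for K
  proof (rule eventually_ball_finite[OF finI], rule ballI, rule eventually_ball_finite[OF finI], rule ballI)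
    fix i j assume i: "i \<in> I" and j: "j \<in> I"
    show "eventually (\<lambda>\<gamma>. i \<noteq> j \<longrightarrow> K * norm \<gamma> < norm (cen \<gamma> i - cen \<gamma> j)) (at 0)"
    proof (cases "i = j")
      case True thus ?thesis by simp
    next
      case ne: False
      consider (a) "i \<le> Mtot S1 m" "j \<le> Mtot S1 m" | (b) "\<not> i \<le> Mtot S1 m" "\<not> j \<le> Mtot S1 m"
        | (c) "i \<le> Mtot S1 m" "\<not> j \<le> Mtot S1 m" | (d) "\<not> i \<le> Mtot S1 m" "j \<le> Mtot S1 m" by blast
      then show ?thesis
      proof cases
        case a
        have "i \<in> {1..Mtot S1 m}" "j \<in> {1..Mtot S1 m}" using a i j by (auto simp: I_def)
        hence "\<zeta>0 i \<noteq> \<zeta>0 j" using inj1 ne by (meson inj_onD)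
        hence "norm (\<zeta>0 i - \<zeta>0 j) > 0" by simp
        from near_ev[OF this, of K] show ?thesis
          by (rule eventually_mono) (use a in \<open>simp add: cen_def\<close>)
      next
        case b
        have "i \<in> {Mtot S1 m + 1..Mtot S1 m + Mtot S2 m}" "j \<in> {Mtot S1 m + 1..Mtot S1 m + Mtot S2 m}"
          using b i j by (auto simp: I_def)
        hence "\<zeta>0 i \<noteq> \<zeta>0 j" using inj2 ne by (meson inj_onD)
        hence "norm (\<zeta>0 i - \<zeta>0 j) > 0" by simp
        from near_ev[OF this, of K] show ?thesis
          by (rule eventually_mono) (use b in \<open>simp add: cen_def\<close>)
      next
        case c
        have e: "cen \<gamma> i - cen \<gamma> j = (\<zeta>0 i - \<zeta>0 j) - inverse \<gamma>" for \<gamma>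
          using c by (simp add: cen_def)
        from far_ev[of K "\<zeta>0 i - \<zeta>0 j"] show ?thesis
          by (rule eventually_mono) (simp add: e)
      next
        case d
        have e: "norm (cen \<gamma> i - cen \<gamma> j) = norm ((\<zeta>0 j - \<zeta>0 i) - inverse \<gamma>)" for \<gamma>
        proof -
          have "cen \<gamma> i - cen \<gamma> j = - ((\<zeta>0 j - \<zeta>0 i) - inverse \<gamma>)" using d by (simp add: cen_def)
          thus ?thesis by (metis norm_minus_cancel)
        qed
        from far_ev[of K "\<zeta>0 j - \<zeta>0 i"] show ?thesis
          by (rule eventually_mono) (simp add: e)
      qed
    qed
  qed
  have cardI: "card I = Mtot S1 m + Mtot S2 m" by (simp add: I_def)
  have CNT: "eventually (\<lambda>\<gamma>. finite (Z \<gamma>) \<and> card (Z \<gamma>) \<le> card I) (at 0)"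
    unfolding cardI Z_def using tensor_count[OF fin disj linf] by simp
  note asm = assembly[OF finI EV SEP CNT]
  then obtain \<zeta> where AA: "eventually (\<lambda>\<gamma>. bij_betw (\<zeta> \<gamma>) I (Z \<gamma>) \<and> (\<forall>w\<in>Z \<gamma>. P \<gamma> w)) (at 0)
   \<and> (\<forall>i\<in>I. (\<lambda>\<gamma>. \<zeta> \<gamma> i - cen \<gamma> i) \<in> O[at 0](\<lambda>\<gamma>. \<gamma>))
   \<and> (\<forall>\<zeta>' :: complex \<Rightarrow> nat \<Rightarrow> complex.
        (eventually (\<lambda>\<gamma>. bij_betw (\<zeta>' \<gamma>) I (Z \<gamma>)) (at 0)
         \<and> (\<forall>i\<in>I. (\<lambda>\<gamma>. \<zeta>' \<gamma> i - cen \<gamma> i) \<in> O[at 0](\<lambda>\<gamma>. \<gamma>)))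
        \<longrightarrow> eventually (\<lambda>\<gamma>. \<forall>i\<in>I. \<zeta>' \<gamma> i = \<zeta> \<gamma> i) (at 0))"
    by (elim exE)
  note A1 = conjunct1[OF AA]
  note A2 = conjunct1[OF conjunct2[OF AA]]
  note A3 = conjunct2[OF conjunct2[OF AA]]
  have f1: "(\<lambda>\<gamma>. f \<gamma> i - cen \<gamma> i) = (\<lambda>\<gamma>. f \<gamma> i - \<zeta>0 i)" if "i \<in> {1..Mtot S1 m}" for f :: "complex \<Rightarrow> nat \<Rightarrow> complex" and i
    using that by (intro ext) (simp add: cen1)
  have f2: "(\<lambda>\<gamma>. f \<gamma> i - cen \<gamma> i) = (\<lambda>\<gamma>. f \<gamma> i - inverse \<gamma> - \<zeta>0 i)"
    if "i \<in> {Mtot S1 m + 1..Mtot S1 m + Mtot S2 m}" for f :: "complex \<Rightarrow> nat \<Rightarrow> complex" and i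
    using that by (intro ext cen2) auto
  have sub1: "{1..Mtot S1 m} \<subseteq> I" and sub2: "{Mtot S1 m + 1..Mtot S1 m + Mtot S2 m} \<subseteq> I"
    by (auto simp: I_def)
  have splitI: "i \<in> {1..Mtot S1 m} \<or> i \<in> {Mtot S1 m + 1..Mtot S1 m + Mtot S2 m}" if "i \<in> I" for i
    using that by (auto simp: I_def)
  show ?thesis
  proof (rule exI[of _ \<zeta>], intro conjI ballI allI impI)
    show "\<forall>\<^sub>F \<gamma> in at 0. bij_betw (\<zeta> \<gamma>) {1..Mtot S1 m + Mtot S2 m} (zeros_tensor S1 S2 m z l linf \<gamma>)
      \<and> (\<forall>w \<in> zeros_tensor S1 S2 m z l linf \<gamma>. deriv (phi_tensor S1 S2 m z l linf \<gamma>) w \<noteq> 0)"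
      using A1 unfolding I_def Z_def P_def .
    fix i assume i: "i \<in> {1..Mtot S1 m}"
    show "(\<lambda>\<gamma>. \<zeta> \<gamma> i - \<zeta>0 i) \<in> O[at 0](\<lambda>\<gamma>. \<gamma>)"
    proof -
      have "i \<in> I" using sub1 i by blast
      hence "(\<lambda>\<gamma>. \<zeta> \<gamma> i - cen \<gamma> i) \<in> O[at 0](\<lambda>\<gamma>. \<gamma>)" using A2 by blast
      thus ?thesis unfolding f1[OF i] .
    qed
  next
    fix i assume i: "i \<in> {Mtot S1 m + 1..Mtot S1 m + Mtot S2 m}"
    show "(\<lambda>\<gamma>. \<zeta> \<gamma> i - inverse \<gamma> - \<zeta>0 i) \<in> O[at 0](\<lambda>\<gamma>. \<gamma>)"
    proof -
      have "i \<in> I" using sub2 i by blast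
      hence "(\<lambda>\<gamma>. \<zeta> \<gamma> i - cen \<gamma> i) \<in> O[at 0](\<lambda>\<gamma>. \<gamma>)" using A2 by blast
      thus ?thesis unfolding f2[OF i] .
    qed
  next
    fix \<zeta>' :: "complex \<Rightarrow> nat \<Rightarrow> complex"
    assume H: "(\<forall>\<^sub>F \<gamma> in at 0.
              bij_betw (\<zeta>' \<gamma>) {1..Mtot S1 m + Mtot S2 m} (zeros_tensor S1 S2 m z l linf \<gamma>))
           \<and> (\<forall>i \<in> {1..Mtot S1 m}. (\<lambda>\<gamma>. \<zeta>' \<gamma> i - \<zeta>0 i) \<in> O[at 0](\<lambda>\<gamma>. \<gamma>))
           \<and> (\<forall>i \<in> {Mtot S1 m + 1..Mtot S1 m + Mtot S2 m}.
                (\<lambda>\<gamma>. \<zeta>' \<gamma> i - inverse \<gamma> - \<zeta>0 i) \<in> O[at 0](\<lambda>\<gamma>. \<gamma>))"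
    have B: "eventually (\<lambda>\<gamma>. bij_betw (\<zeta>' \<gamma>) I (Z \<gamma>)) (at 0)" using H unfolding I_def Z_def by blast
    have O: "\<forall>i\<in>I. (\<lambda>\<gamma>. \<zeta>' \<gamma> i - cen \<gamma> i) \<in> O[at 0](\<lambda>\<gamma>. \<gamma>)"
    proof
      fix i assume "i \<in> I"
      from splitI[OF this] show "(\<lambda>\<gamma>. \<zeta>' \<gamma> i - cen \<gamma> i) \<in> O[at 0](\<lambda>\<gamma>. \<gamma>)"
      proof
        assume i: "i \<in> {1..Mtot S1 m}"
        show ?thesis unfolding f1[OF i] using H i by blast
      next
        assume i: "i \<in> {Mtot S1 m + 1..Mtot S1 m + Mtot S2 m}"
        show ?thesis unfolding f2[OF i] using H i by blast
      qed
    qed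
    have "eventually (\<lambda>\<gamma>. \<forall>i\<in>I. \<zeta>' \<gamma> i = \<zeta> \<gamma> i) (at 0)" using A3[rule_format, OF conjI[OF B O]] .
    thus "\<forall>\<^sub>F \<gamma> in at 0. \<forall>i \<in> {1..Mtot S1 m + Mtot S2 m}. \<zeta>' \<gamma> i = \<zeta> \<gamma> i" unfolding I_def .
  qed
qed

end
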